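(* Let $\rho>0$, $\sigma^2>0$, $M_R\le M_T$, let $\mathbf g\in\mathbb C^{M_R}$, $\mathbf h\in\mathbb C^{M_T}$ have unit-modulus entries, $\mathbf H=\mathbf g\mathbf h^T$, $\mathrm{vec}(\mathbf\Phi)\sim\mathcal N(\mathbf 0,\sigma^2\mathbf I_{M_TM_R})$ real, $\hat{\mathbf H}=\mathbf H\circ(\mathbf 1+j\mathbf\Phi)$ and $\hat C=\mathbb E\{\log_2\det(\mathbf I_{M_R}+\frac{\rho}{M_T}\hat{\mathbf H}\hat{\mathbf H}^H)\}$. Then $$\hat C\le\log_2\Big(1+\sum_{n=1}^{M_R}\Big(\frac{\rho}{M_T}\Big)^n(\sigma^2)^n\binom{M_R}{n}\binom{M_T}{n}n!\Big(1+\frac{n}{\sigma^2}\Big)\Big).$$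
   Context: $\circ$ is the Hadamard product and $\mathbf 1$ the all-ones $M_R\times M_T$ matrix. *)

theory Defs
  imports "HOL-Probability.Probability" "Jordan_Normal_Form.Determinant"
begin

definition Hhat :: "nat \<Rightarrow> nat \<Rightarrow> (nat \<Rightarrow> complex) \<Rightarrow> (nat \<Rightarrow> complex)
    \<Rightarrow> (nat \<times> nat \<Rightarrow> real) \<Rightarrow> complex mat" where
  "Hhat MR MT g h Phi = mat MR MT (\<lambda>(i,j). (g i * h j) * (1 + \<i> * complex_of_real (Phi (i,j))))"

definition herm :: "complex mat \<Rightarrow> complex mat" where
  "herm A = mat (dim_col A) (dim_row A) (\<lambda>(i,j). cnj (A $$ (j,i)))"

definition Phi_dist :: "real \<Rightarrow> nat \<Rightarrow> nat \<Rightarrow> (nat \<times> nat \<Rightarrow> real) measure" where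
  "Phi_dist s2 MR MT = PiM ({0..<MR} \<times> {0..<MT}) (\<lambda>_. density lborel (normal_density 0 (sqrt s2)))"

text \<open>Capacity log2 det(I + rho/MT Hhat Hhat^H); the determinant is real, we take its real part.\<close>
definition cap_integrand :: "real \<Rightarrow> nat \<Rightarrow> nat \<Rightarrow> (nat \<Rightarrow> complex) \<Rightarrow> (nat \<Rightarrow> complex)
    \<Rightarrow> (nat \<times> nat \<Rightarrow> real) \<Rightarrow> real" where
  "cap_integrand rho MR MT g h Phi =
     log 2 (Re (det (1\<^sub>m MR + complex_of_real (rho / real MT) \<cdot>\<^sub>m
                      (Hhat MR MT g h Phi * herm (Hhat MR MT g h Phi)))))"

end

theory Submission
  imports Defs "Jordan_Normal_Form.Char_Poly"
begin


lemma perm_sum_identical_rows: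
  fixes W :: "'a \<Rightarrow> 'a \<Rightarrow> 'b::field_char_0"
  assumes U: "finite U" and a: "a \<in> U" and b: "b \<in> U" and ab: "a \<noteq> b"
    and eq: "\<And>k. W a k = W b k"
  shows "(\<Sum>p | p permutes U. of_int (sign p) * (\<Prod>j\<in>U. W j (p j))) = 0"
proof -
  let ?t = "Transposition.transpose a b"
  let ?f = "\<lambda>p. of_int (sign p) * (\<Prod>j\<in>U. W j (p j)) :: 'b"
  have t: "?t permutes U" using a b by (rule permutes_swap_id)
  have "sum ?f {p. p permutes U} = sum (\<lambda>p. ?f (p \<circ> ?t)) {p. p permutes U}"
    by (rule sum_permutations_compose_right[OF t])
  also have "\<dots> = sum (\<lambda>p. - ?f p) {p. p permutes U}"
  proof (rule sum.cong[OF refl])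
    fix p assume "p \<in> {p. p permutes U}"
    then have p: "p permutes U" by simp
    have s: "sign (p \<circ> ?t) = - sign p"
      using p t U ab by (simp add: sign_compose permutes_imp_permutation sign_swap_id)
    have "(\<Prod>j\<in>U. W j ((p \<circ> ?t) j)) = (\<Prod>j\<in>U. W (?t j) ((p \<circ> ?t) (?t j)))"
      by (rule prod.reindex_bij_betw[symmetric]) (rule permutes_imp_bij[OF t])
    also have "\<dots> = (\<Prod>j\<in>U. W j (p j))"
    proof (rule prod.cong[OF refl])
      fix j assume "j \<in> U"
      have "W (?t j) = W j" using eq by (cases "j = a"; cases "j = b") (auto simp: fun_eq_iff)
      then show "W (?t j) ((p \<circ> ?t) (?t j)) = W j (p j)" by simp
    qed
    finally show "?f (p \<circ> ?t) = - ?f p" using s by simp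
  qed
  also have "\<dots> = - sum ?f {p. p permutes U}" by (simp add: sum_negf)
  finally show ?thesis by simp
qed

lemma permutes_fix_iff:
  assumes "V \<subseteq> U"
  shows "(p permutes U \<and> (\<forall>j\<in>U - V. p j = j)) \<longleftrightarrow> p permutes V"
  using assms unfolding permutes_def by blast

lemma perm_expand:
  fixes W :: "'a \<Rightarrow> 'a \<Rightarrow> 'b::comm_ring_1"
  assumes U: "finite U"
  shows "(\<Sum>p | p permutes U. of_int (sign p) * (\<Prod>j\<in>U. W j (p j) + x * (if p j = j then 1 else 0)))
    = (\<Sum>V\<in>Pow U. x ^ card (U - V) * (\<Sum>p | p permutes V. of_int (sign p) * (\<Prod>j\<in>V. W j (p j))))"
proof -
  have fin: "finite {p. p permutes U}" using U by (rule finite_permutations)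
  have "(\<Sum>p | p permutes U. of_int (sign p) * (\<Prod>j\<in>U. W j (p j) + x * (if p j = j then 1 else 0)))
    = (\<Sum>p | p permutes U. \<Sum>V\<in>Pow U. of_int (sign p) * ((\<Prod>j\<in>V. W j (p j)) *
           (\<Prod>j\<in>U - V. x * (if p j = j then 1 else 0))))"
    by (simp add: prod_add[OF U] sum_distrib_left)
  also have "\<dots> = (\<Sum>V\<in>Pow U. \<Sum>p | p permutes U. of_int (sign p) * ((\<Prod>j\<in>V. W j (p j)) *
           (\<Prod>j\<in>U - V. x * (if p j = j then 1 else 0))))"
    by (rule sum.swap)
  also have "\<dots> = (\<Sum>V\<in>Pow U. x ^ card (U - V) * (\<Sum>p | p permutes V. of_int (sign p) * (\<Prod>j\<in>V. W j (p j))))"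
  proof (rule sum.cong[OF refl])
    fix V assume "V \<in> Pow U"
    then have VU: "V \<subseteq> U" by simp
    have "(\<Sum>p | p permutes U. of_int (sign p) * ((\<Prod>j\<in>V. W j (p j)) *
           (\<Prod>j\<in>U - V. x * (if p j = j then 1 else 0))))
       = (\<Sum>p | p permutes U. if (\<forall>j\<in>U - V. p j = j) then x ^ card (U - V) * (of_int (sign p) * (\<Prod>j\<in>V. W j (p j))) else 0)"
    proof (rule sum.cong[OF refl])
      fix p
      show "of_int (sign p) * ((\<Prod>j\<in>V. W j (p j)) * (\<Prod>j\<in>U - V. x * (if p j = j then 1 else 0))) =
         (if (\<forall>j\<in>U - V. p j = j) then x ^ card (U - V) * (of_int (sign p) * (\<Prod>j\<in>V. W j (p j))) else 0)"
      proof (cases "\<forall>j\<in>U - V. p j = j")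
        case True
        then have "(\<Prod>j\<in>U - V. x * (if p j = j then 1 else 0)) = (\<Prod>j\<in>U - V. x)"
          by (intro prod.cong) auto
        then show ?thesis using True by (simp add: ac_simps)
      next
        case False
        then obtain j where "j \<in> U - V" "p j \<noteq> j" by auto
        then have "(\<Prod>j\<in>U - V. x * (if p j = j then 1 else 0)) = 0"
          using U by (intro prod_zero) auto
        then show ?thesis using False by auto
      qed
    qed
    also have "\<dots> = (\<Sum>p \<in> {p. p permutes U} \<inter> {p. \<forall>j\<in>U - V. p j = j}. x ^ card (U - V) * (of_int (sign p) * (\<Prod>j\<in>V. W j (p j))))"
      by (rule sum.inter_restrict[OF fin, of _ "{p. \<forall>j\<in>U - V. p j = j}", symmetric, simplified])
    also have "{p. p permutes U} \<inter> {p. \<forall>j\<in>U - V. p j = j} = {p. p permutes V}"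
      using permutes_fix_iff[OF VU] by blast
    finally show "(\<Sum>p | p permutes U. of_int (sign p) * ((\<Prod>j\<in>V. W j (p j)) *
           (\<Prod>j\<in>U - V. x * (if p j = j then 1 else 0)))) =
       x ^ card (U - V) * (\<Sum>p | p permutes V. of_int (sign p) * (\<Prod>j\<in>V. W j (p j)))"
      by (simp add: sum_distrib_left)
  qed
  finally show ?thesis .
qed

lemma sign_sum_zero:
  assumes U: "finite U" and c: "2 \<le> card U"
  shows "(\<Sum>p | p permutes U. of_int (sign p) :: 'b::field_char_0) = 0"
proof -
  from c have "U \<noteq> {}" by auto
  then obtain a where a: "a \<in> U" by auto
  have "card (U - {a}) \<ge> 1" using c a U by simp
  then have "U - {a} \<noteq> {}" by (metis card.empty not_one_le_zero)
  then obtain b where b: "b \<in> U" "b \<noteq> a" by auto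
  have "(\<Sum>p | p permutes U. of_int (sign p) * (\<Prod>j\<in>U. (\<lambda>_ _. 1::'b) j (p j))) = 0"
    by (rule perm_sum_identical_rows[OF U a b(1)]) (use b in auto)
  then show ?thesis by simp
qed

lemma permutes_empty_set: "{p. p permutes {}} = {id}"
  by (auto simp: permutes_empty)

lemma permutes_sing_set: "{p. p permutes {a}} = {id}"
  by (auto simp: permutes_sing)

lemma det_J_sI:
  fixes s :: "'b::field_char_0"
  assumes U: "finite U"
  shows "(\<Sum>p | p permutes U. of_int (sign p) * (\<Prod>j\<in>U. if p j = j then 1 + s else 1))
     = s ^ card U + of_nat (card U) * s ^ (card U - 1)"
proof -
  define g where "g V = s ^ card (U - V) * (\<Sum>p | p permutes V. of_int (sign p) * (\<Prod>j\<in>V. (\<lambda>_ _. 1::'b) j (p j)))" for V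
  have "(\<Sum>p | p permutes U. of_int (sign p) * (\<Prod>j\<in>U. if p j = j then 1 + s else 1))
     = (\<Sum>p | p permutes U. of_int (sign p) * (\<Prod>j\<in>U. (\<lambda>_ _. 1::'b) j (p j) + s * (if p j = j then 1 else 0)))"
    by (intro sum.cong refl arg_cong2[where f="(*)"] prod.cong) auto
  also have "\<dots> = sum g (Pow U)" unfolding g_def by (rule perm_expand[OF U])
  also have "\<dots> = sum g (insert {} ((\<lambda>a. {a}) ` U))"
  proof (rule sum.mono_neutral_right)
    show "finite (Pow U)" using U by simp
    show "insert {} ((\<lambda>a. {a}) ` U) \<subseteq> Pow U" by auto
    show "\<forall>V\<in>Pow U - insert {} ((\<lambda>a. {a}) ` U). g V = 0"
    proof
      fix V assume V: "V \<in> Pow U - insert {} ((\<lambda>a. {a}) ` U)"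
      then have fV: "finite V" using U finite_subset by auto
      have "card V \<noteq> 0" using V fV by auto
      moreover have "card V \<noteq> 1" using V by (auto simp: card_1_singleton_iff)
      ultimately have "2 \<le> card V" by linarith
      then show "g V = 0" unfolding g_def using sign_sum_zero[OF fV, where 'b='b] by simp
    qed
  qed
  also have "\<dots> = g {} + sum g ((\<lambda>a. {a}) ` U)"
    by (rule sum.insert) (use U in auto)
  also have "sum g ((\<lambda>a. {a}) ` U) = sum (\<lambda>a. g {a}) U"
    by (subst sum.reindex) (auto simp: inj_on_def)
  also have "\<dots> = sum (\<lambda>a. s ^ (card U - 1)) U"
    by (intro sum.cong refl) (simp add: g_def permutes_sing_set U)
  also have "g {} = s ^ card U" by (simp add: g_def permutes_empty_set)
  finally show ?thesis by simp
qed

lemma perm_sum_f: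
  fixes s :: "'b::field_char_0"
  assumes V: "finite V"
  shows "(\<Sum>p | p permutes V. of_int (sign p) * (\<Prod>j\<in>V. if f j = f (p j) then 1 + s else 1))
     = (if inj_on f V then s ^ card V + of_nat (card V) * s ^ (card V - 1) else 0)"
proof (cases "inj_on f V")
  case True
  have "(\<Sum>p | p permutes V. of_int (sign p) * (\<Prod>j\<in>V. if f j = f (p j) then 1 + s else 1))
     = (\<Sum>p | p permutes V. of_int (sign p) * (\<Prod>j\<in>V. if p j = j then 1 + s else 1))"
  proof (intro sum.cong refl arg_cong2[where f="(*)"] prod.cong)
    fix p j assume p: "p \<in> {p. p permutes V}" and j: "j \<in> V"
    have "p j \<in> V" using p j by (simp add: permutes_in_image)
    then have "f j = f (p j) \<longleftrightarrow> p j = j" using True j by (auto dest: inj_onD)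
    then show "(if f j = f (p j) then 1 + s else 1) = (if p j = j then 1 + s else 1)" by simp
  qed
  then show ?thesis using True det_J_sI[OF V] by simp
next
  case False
  then obtain a b where ab: "a \<in> V" "b \<in> V" "a \<noteq> b" "f a = f b" by (auto simp: inj_on_def)
  have "(\<Sum>p | p permutes V. of_int (sign p) * (\<Prod>j\<in>V. (\<lambda>j k. if f j = f k then 1 + s else 1) j (p j))) = 0"
    by (rule perm_sum_identical_rows[OF V ab(1,2,3)]) (use ab in auto)
  then show ?thesis using False by simp
qed

lemma sum_inj_count:
  fixes D :: "'b::field_char_0"
  assumes V: "finite V"
  shows "(\<Sum>f\<in>V \<rightarrow>\<^sub>E {0..<n::nat}. if inj_on f V then D else 0)
     = of_nat (\<Prod>i = 0..<card V. n - i) * D"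
proof -
  have fin: "finite (V \<rightarrow>\<^sub>E {0..<n::nat})" using V by (simp add: finite_PiE)
  have "(\<Sum>f\<in>V \<rightarrow>\<^sub>E {0..<n::nat}. if inj_on f V then D else 0)
      = (\<Sum>f\<in>{f\<in>V \<rightarrow>\<^sub>E {0..<n::nat}. inj_on f V}. D)"
    by (rule sum.inter_filter[OF fin, symmetric])
  also have "\<dots> = of_nat (card {f\<in>V \<rightarrow>\<^sub>E {0..<n::nat}. inj_on f V}) * D" by simp
  also have "card {f\<in>V \<rightarrow>\<^sub>E {0..<n::nat}. inj_on f V} = (\<Prod>i = 0..<card V. n - i)"
    using card_inj_on_subset_funcset[OF V, of "{0..<n}" V] by (simp add: prod.atLeast0_lessThan_Suc)
  finally show ?thesis .
qed

lemma sum_Pow_card: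
  fixes F :: "nat \<Rightarrow> 'b::comm_semiring_1"
  assumes U: "finite U"
  shows "(\<Sum>V\<in>Pow U. F (card V)) = (\<Sum>k=0..card U. of_nat (card U choose k) * F k)"
proof -
  have "(\<Sum>V\<in>Pow U. F (card V)) = (\<Sum>k\<in>{0..card U}. \<Sum>V\<in>{V. V \<in> Pow U \<and> card V = k}. F (card V))"
    by (rule sum.group[symmetric]) (use U in \<open>auto intro: card_mono\<close>)
  also have "\<dots> = (\<Sum>k\<in>{0..card U}. of_nat (card U choose k) * F k)"
  proof (rule sum.cong[OF refl])
    fix k
    have "(\<Sum>V\<in>{V. V \<in> Pow U \<and> card V = k}. F (card V)) = (\<Sum>V\<in>{V. V \<in> Pow U \<and> card V = k}. F k)"
      by (rule sum.cong) auto
    also have "\<dots> = of_nat (card {B. B \<subseteq> U \<and> card B = k}) * F k" by simp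
    finally show "(\<Sum>V\<in>{V. V \<in> Pow U \<and> card V = k}. F (card V)) = of_nat (card U choose k) * F k"
      using n_subsets[OF U, of k] by simp
  qed
  finally show ?thesis .
qed


definition Bm :: "(nat \<times> nat \<Rightarrow> real) \<Rightarrow> nat \<Rightarrow> nat \<Rightarrow> complex" where
  "Bm Phi r l = 1 + \<i> * complex_of_real (Phi (r,l))"

definition Xrow :: "nat set \<Rightarrow> (nat \<Rightarrow> nat) \<Rightarrow> (nat \<Rightarrow> nat) \<Rightarrow> (nat \<times> nat \<Rightarrow> real) \<Rightarrow> complex" where
  "Xrow V p f Phi = (\<Prod>r\<in>V. Bm Phi r (f r) * cnj (Bm Phi r (f (Hilbert_Choice.inv p r))))"

lemma Hhat_entry: "i < m \<Longrightarrow> l < n \<Longrightarrow> Hhat m n g h Phi $$ (i,l) = g i * h l * Bm Phi i l"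
  by (simp add: Hhat_def Bm_def)

lemma P_entry:
  assumes "i < m" "j < m"
  shows "(1\<^sub>m m + complex_of_real c \<cdot>\<^sub>m (Hhat m n g h Phi * herm (Hhat m n g h Phi))) $$ (i,j)
     = complex_of_real c * (\<Sum>l = 0..<n. Hhat m n g h Phi $$ (i,l) * cnj (Hhat m n g h Phi $$ (j,l)))
       + 1 * (if j = i then 1 else 0)"
  using assms by (auto simp: Hhat_def herm_def scalar_prod_def intro!: sum.cong)

lemma prod_unit_cnj:
  assumes V: "finite V" and p: "p permutes V" and g: "\<forall>i\<in>V. cmod (g i) = 1"
  shows "(\<Prod>j\<in>V. g j * cnj (g (p j))) = 1"
proof -
  have "(\<Prod>j\<in>V. cnj (g (p j))) = (\<Prod>j\<in>V. cnj (g j))"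
    using prod.permute[OF p, of "\<lambda>j. cnj (g j)"] by (simp add: o_def)
  then have "(\<Prod>j\<in>V. g j * cnj (g (p j))) = (\<Prod>j\<in>V. g j * cnj (g j))"
    by (simp add: prod.distrib)
  also have "\<dots> = 1"
    by (rule prod.neutral) (use g in \<open>auto simp: complex_norm_square[symmetric]\<close>)
  finally show ?thesis .
qed

lemma row_prod_eq:
  assumes V: "finite V" "V \<subseteq> {0..<m}" and p: "p permutes V" and f: "f \<in> V \<rightarrow>\<^sub>E {0..<n}"
    and g: "\<forall>i<m. cmod (g i) = 1" and h: "\<forall>j<n. cmod (h j) = 1"
  shows "(\<Prod>j\<in>V. Hhat m n g h Phi $$ (j, f j) * cnj (Hhat m n g h Phi $$ (p j, f j))) = Xrow V p f Phi"
proof -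
  have pV: "\<And>j. j \<in> V \<Longrightarrow> p j \<in> V" using p by (simp add: permutes_in_image)
  have fj: "\<And>j. j \<in> V \<Longrightarrow> f j < n" using f by auto
  have "(\<Prod>j\<in>V. Hhat m n g h Phi $$ (j, f j) * cnj (Hhat m n g h Phi $$ (p j, f j)))
     = (\<Prod>j\<in>V. (g j * cnj (g (p j))) * (h (f j) * cnj (h (f j))) * (Bm Phi j (f j) * cnj (Bm Phi (p j) (f j))))"
  proof (rule prod.cong[OF refl])
    fix j assume j: "j \<in> V"
    then have "j < m" "p j < m" "f j < n" using V pV[OF j] fj[OF j] j by auto
    then show "Hhat m n g h Phi $$ (j, f j) * cnj (Hhat m n g h Phi $$ (p j, f j)) =
      (g j * cnj (g (p j))) * (h (f j) * cnj (h (f j))) * (Bm Phi j (f j) * cnj (Bm Phi (p j) (f j)))"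
      by (simp add: Hhat_entry)
  qed
  also have "\<dots> = (\<Prod>j\<in>V. g j * cnj (g (p j))) * (\<Prod>j\<in>V. h (f j) * cnj (h (f j))) * (\<Prod>j\<in>V. Bm Phi j (f j) * cnj (Bm Phi (p j) (f j)))"
    by (simp add: prod.distrib)
  also have "(\<Prod>j\<in>V. g j * cnj (g (p j))) = 1"
    by (rule prod_unit_cnj[OF V(1) p]) (use g V in auto)
  also have "(\<Prod>j\<in>V. h (f j) * cnj (h (f j))) = 1"
    by (rule prod.neutral) (use h fj in \<open>auto simp: complex_norm_square[symmetric]\<close>)
  also have "(\<Prod>j\<in>V. Bm Phi j (f j) * cnj (Bm Phi (p j) (f j))) = (\<Prod>j\<in>V. Bm Phi j (f j)) * (\<Prod>j\<in>V. cnj (Bm Phi (p j) (f j)))"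
    by (simp add: prod.distrib)
  also have "(\<Prod>j\<in>V. cnj (Bm Phi (p j) (f j))) = (\<Prod>r\<in>V. cnj (Bm Phi r (f (Hilbert_Choice.inv p r))))"
    using prod.permute[OF p, of "\<lambda>r. cnj (Bm Phi r (f (Hilbert_Choice.inv p r)))"] by (simp add: o_def permutes_inverses(2)[OF p])
  finally show ?thesis by (simp add: Xrow_def prod.distrib)
qed

lemma det_expand:
  assumes g: "\<forall>i<m. cmod (g i) = 1" and h: "\<forall>j<n. cmod (h j) = 1"
  shows "det (1\<^sub>m m + complex_of_real c \<cdot>\<^sub>m (Hhat m n g h Phi * herm (Hhat m n g h Phi)))
    = (\<Sum>V\<in>Pow {0..<m}. \<Sum>p | p permutes V. of_int (sign p) *
         (complex_of_real c ^ card V * (\<Sum>f\<in>V \<rightarrow>\<^sub>E {0..<n}. Xrow V p f Phi)))"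
proof -
  let ?A = "Hhat m n g h Phi"
  let ?P = "1\<^sub>m m + complex_of_real c \<cdot>\<^sub>m (?A * herm ?A)"
  let ?W = "\<lambda>i j. complex_of_real c * (\<Sum>l = 0..<n. ?A $$ (i,l) * cnj (?A $$ (j,l)))"
  have Pc: "?P \<in> carrier_mat m m" unfolding carrier_mat_def by (simp add: Hhat_def herm_def)
  have "det ?P = (\<Sum>p | p permutes {0..<m}. of_int (sign p) * (\<Prod>i\<in>{0..<m}. ?P $$ (i, p i)))"
    by (rule det_def'[OF Pc])
  also have "\<dots> = (\<Sum>p | p permutes {0..<m}. of_int (sign p) * (\<Prod>i\<in>{0..<m}. ?W i (p i) + 1 * (if p i = i then 1 else 0)))"
  proof (intro sum.cong refl arg_cong2[where f="(*)"] prod.cong)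
    fix p i assume p: "p \<in> {p. p permutes {0..<m}}" and i: "i \<in> {0..<m}"
    have "p i < m" using p i by (auto dest: permutes_in_image)
    then show "?P $$ (i, p i) = ?W i (p i) + 1 * (if p i = i then 1 else 0)"
      using i by (subst P_entry) auto
  qed
  also have "\<dots> = (\<Sum>V\<in>Pow {0..<m}. 1 ^ card ({0..<m} - V) * (\<Sum>p | p permutes V. of_int (sign p) * (\<Prod>j\<in>V. ?W j (p j))))"
    by (rule perm_expand) simp
  also have "\<dots> = (\<Sum>V\<in>Pow {0..<m}. \<Sum>p | p permutes V. of_int (sign p) *
         (complex_of_real c ^ card V * (\<Sum>f\<in>V \<rightarrow>\<^sub>E {0..<n}. Xrow V p f Phi)))"
  proof (rule sum.cong[OF refl])
    fix V assume "V \<in> Pow {0..<m}"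
    then have V: "finite V" "V \<subseteq> {0..<m}" using finite_subset by auto
    show "1 ^ card ({0..<m} - V) * (\<Sum>p | p permutes V. of_int (sign p) * (\<Prod>j\<in>V. ?W j (p j))) =
      (\<Sum>p | p permutes V. of_int (sign p) * (complex_of_real c ^ card V * (\<Sum>f\<in>V \<rightarrow>\<^sub>E {0..<n}. Xrow V p f Phi)))"
      unfolding power_one mult_1
    proof (intro sum.cong refl arg_cong2[where f="(*)"])
      fix p assume "p \<in> {p. p permutes V}"
      then have p: "p permutes V" by simp
      have "(\<Prod>j\<in>V. ?W j (p j)) = complex_of_real c ^ card V * (\<Prod>j\<in>V. \<Sum>l = 0..<n. ?A $$ (j,l) * cnj (?A $$ (p j,l)))"
        by (simp add: prod.distrib)
      also have "(\<Prod>j\<in>V. \<Sum>l = 0..<n. ?A $$ (j,l) * cnj (?A $$ (p j,l)))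
          = (\<Sum>f\<in>V \<rightarrow>\<^sub>E {0..<n}. \<Prod>j\<in>V. ?A $$ (j, f j) * cnj (?A $$ (p j, f j)))"
        by (rule prod_sum_PiE) (use V in auto)
      also have "\<dots> = (\<Sum>f\<in>V \<rightarrow>\<^sub>E {0..<n}. Xrow V p f Phi)"
        by (rule sum.cong[OF refl], rule row_prod_eq[OF V p _ g h])
      finally show "(\<Prod>j\<in>V. ?W j (p j)) = complex_of_real c ^ card V * (\<Sum>f\<in>V \<rightarrow>\<^sub>E {0..<n}. Xrow V p f Phi)" .
    qed
  qed
  finally show ?thesis .
qed


abbreviation NN :: "real \<Rightarrow> real measure" where
  "NN s2 \<equiv> density lborel (normal_density 0 (sqrt s2))"

context
  fixes s2 :: real assumes s2pos: "0 < s2"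
begin

lemma probN: "prob_space (NN s2)" by (rule prob_space_normal_density) (use s2pos in simp)

lemma setsN: "sets (NN s2) = sets borel" by simp

lemma probM: "prob_space (Phi_dist s2 m n)"
  unfolding Phi_dist_def by (rule prob_space_PiM) (rule probN)

lemma comp_borel: "k \<in> I \<Longrightarrow> (\<lambda>x. x k) \<in> borel_measurable (PiM I (\<lambda>_. NN s2))"
  using measurable_component_singleton[of k I "\<lambda>_. NN s2"] measurable_cong_sets[OF refl setsN]
  by blast

lemma comp_borel_M: "k \<in> {0..<m} \<times> {0..<n} \<Longrightarrow> (\<lambda>x. x k) \<in> borel_measurable (Phi_dist s2 m n)"
  unfolding Phi_dist_def by (rule comp_borel)

lemma comp_NN_M: "k \<in> {0..<m} \<times> {0..<n} \<Longrightarrow> (\<lambda>x. x k) \<in> measurable (Phi_dist s2 m n) (NN s2)"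
  unfolding Phi_dist_def by (rule measurable_component_singleton)

lemma distr_comp: "k \<in> {0..<m} \<times> {0..<n} \<Longrightarrow> distr (Phi_dist s2 m n) (NN s2) (\<lambda>x. x k) = NN s2"
  unfolding Phi_dist_def by (rule distr_PiM_component) (auto intro: probN)

lemma integral_comp:
  fixes f :: "real \<Rightarrow> real"
  assumes k: "k \<in> {0..<m} \<times> {0..<n}" and f: "f \<in> borel_measurable borel"
  shows "integral\<^sup>L (Phi_dist s2 m n) (\<lambda>x. f (x k)) = (\<integral>y. normal_density 0 (sqrt s2) y * f y \<partial>lborel)"
    and "integrable (Phi_dist s2 m n) (\<lambda>x. f (x k)) \<longleftrightarrow> integrable lborel (\<lambda>y. normal_density 0 (sqrt s2) y * f y)"
proof -
  have fm: "f \<in> borel_measurable (NN s2)" using f measurable_cong_sets[OF setsN refl] by blast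
  have "integral\<^sup>L (Phi_dist s2 m n) (\<lambda>x. f (x k)) = integral\<^sup>L (distr (Phi_dist s2 m n) (NN s2) (\<lambda>x. x k)) f"
    by (rule integral_distr[OF comp_NN_M[OF k] fm, symmetric])
  also have "\<dots> = integral\<^sup>L (NN s2) f" by (simp add: distr_comp[OF k])
  also have "\<dots> = (\<integral>y. normal_density 0 (sqrt s2) y * f y \<partial>lborel)"
    by (subst integral_density) (use f in auto)
  finally show "integral\<^sup>L (Phi_dist s2 m n) (\<lambda>x. f (x k)) = (\<integral>y. normal_density 0 (sqrt s2) y * f y \<partial>lborel)" .
  have "integrable (Phi_dist s2 m n) (\<lambda>x. f (x k)) \<longleftrightarrow> integrable (distr (Phi_dist s2 m n) (NN s2) (\<lambda>x. x k)) f"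
    by (rule integrable_distr_eq[OF comp_NN_M[OF k] fm, symmetric])
  also have "\<dots> \<longleftrightarrow> integrable (NN s2) f" by (simp add: distr_comp[OF k])
  also have "\<dots> \<longleftrightarrow> integrable lborel (\<lambda>y. normal_density 0 (sqrt s2) y * f y)"
    by (subst integrable_density) (use f in auto)
  finally show "integrable (Phi_dist s2 m n) (\<lambda>x. f (x k)) \<longleftrightarrow> integrable lborel (\<lambda>y. normal_density 0 (sqrt s2) y * f y)" .
qed

lemma mom1:
  assumes k: "k \<in> {0..<m} \<times> {0..<n}"
  shows "integrable (Phi_dist s2 m n) (\<lambda>x. x k)" "integral\<^sup>L (Phi_dist s2 m n) (\<lambda>x. x k) = 0"
proof -
  show "integrable (Phi_dist s2 m n) (\<lambda>x. x k)"
    using integral_comp(2)[OF k, of "\<lambda>y. y"] integrable_normal_moment_nz_1[where \<mu>=0 and \<sigma>="sqrt s2"] s2pos by simp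
  show "integral\<^sup>L (Phi_dist s2 m n) (\<lambda>x. x k) = 0"
    using integral_comp(1)[OF k, of "\<lambda>y. y"] integral_normal_moment_nz_1[where \<mu>=0 and \<sigma>="sqrt s2"] s2pos by simp
qed

lemma mom2:
  assumes k: "k \<in> {0..<m} \<times> {0..<n}"
  shows "integrable (Phi_dist s2 m n) (\<lambda>x. (x k)^2)" "integral\<^sup>L (Phi_dist s2 m n) (\<lambda>x. (x k)^2) = s2"
proof -
  show "integrable (Phi_dist s2 m n) (\<lambda>x. (x k)^2)"
    using integral_comp(2)[OF k, of "\<lambda>y. y^2"] integrable_normal_moment[where \<mu>=0 and \<sigma>="sqrt s2" and k=2] s2pos by simp
  have "has_bochner_integral lborel (\<lambda>x. normal_density 0 (sqrt s2) x * (x - 0) ^ (2 * 1)) (fact (2 * 1) / ((2 / (sqrt s2)\<^sup>2)^1 * fact 1))"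
    by (rule normal_moment_even) (use s2pos in simp)
  then have "(\<integral>y. normal_density 0 (sqrt s2) y * y^2 \<partial>lborel) = s2"
    using s2pos by (simp add: has_bochner_integral_integral_eq)
  then show "integral\<^sup>L (Phi_dist s2 m n) (\<lambda>x. (x k)^2) = s2"
    using integral_comp(1)[OF k, of "\<lambda>y. y^2"] by simp
qed

lemma indep_coords:
  assumes K: "{0..<m} \<times> {0..<n} \<noteq> ({} :: (nat \<times> nat) set)"
  shows "prob_space.indep_vars (Phi_dist s2 m n) (\<lambda>_. borel) (\<lambda>k x. x k) ({0..<m} \<times> {0..<n})"
proof -
  let ?K = "{0..<m} \<times> {0..<n}"
  let ?M = "Phi_dist s2 m n"
  interpret prob_space ?M by (rule probM)
  have rv: "random_variable (NN s2) (\<lambda>x. x k)" for k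
  proof (cases "k \<in> ?K")
    case True then show ?thesis by (rule comp_NN_M)
  next
    case False
    obtain a b where kab: "k = (a,b)" by (cases k)
    have "(\<lambda>x. undefined) \<in> measurable ?M (NN s2)" by simp
    then show ?thesis
      by (rule measurable_cong[THEN iffD1, rotated]) (use False kab in \<open>auto simp: Phi_dist_def space_PiM PiE_def extensional_def\<close>)
  qed
  have "indep_vars (\<lambda>_. NN s2) (\<lambda>k x. x k) ?K"
  proof (subst indep_vars_iff_distr_eq_PiM[OF K rv])
    have "distr ?M (\<Pi>\<^sub>M i\<in>?K. NN s2) (\<lambda>x. \<lambda>i\<in>?K. x i) = distr ?M ?M (\<lambda>x. x)"
      by (rule distr_cong) (auto simp: Phi_dist_def space_PiM PiE_def extensional_def restrict_def fun_eq_iff)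
    also have "\<dots> = ?M" by simp
    also have "\<dots> = (\<Pi>\<^sub>M i\<in>?K. distr ?M (NN s2) (\<lambda>x. x i))"
      unfolding Phi_dist_def by (rule PiM_cong) (auto simp: distr_comp[unfolded Phi_dist_def])
    finally show "distr ?M (\<Pi>\<^sub>M i\<in>?K. NN s2) (\<lambda>x. \<lambda>i\<in>?K. x i) = (\<Pi>\<^sub>M i\<in>?K. distr ?M (NN s2) (\<lambda>x. x i))" .
  qed
  from indep_vars_compose2[OF this, of "\<lambda>_ x. x" "\<lambda>_. borel"]
  show ?thesis by (simp add: measurable_ident_sets)
qed

lemma Bm_prod_expand:
  "Bm w r a * cnj (Bm w r b) = complex_of_real (1 + w (r,a) * w (r,b)) + \<i> * complex_of_real (w (r,a) - w (r,b))"
  by (simp add: Bm_def algebra_simps complex_eq_iff)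

lemma row_factor:
  assumes r: "r < m" and a: "a < n" and b: "b < n"
  shows "integrable (Phi_dist s2 m n) (\<lambda>w. Bm w r a * cnj (Bm w r b))"
    and "integral\<^sup>L (Phi_dist s2 m n) (\<lambda>w. Bm w r a * cnj (Bm w r b)) = (if a = b then 1 + complex_of_real s2 else 1)"
proof -
  let ?M = "Phi_dist s2 m n"
  interpret prob_space ?M by (rule probM)
  have ka: "(r,a) \<in> {0..<m} \<times> {0..<n}" and kb: "(r,b) \<in> {0..<m} \<times> {0..<n}" using r a b by auto
  have iprod: "integrable ?M (\<lambda>w. w (r,a) * w (r,b)) \<and> integral\<^sup>L ?M (\<lambda>w. w (r,a) * w (r,b)) = (if a = b then s2 else 0)"
  proof (cases "a = b")
    case True
    then show ?thesis using mom2[OF ka] by (simp add: power2_eq_square)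
  next
    case False
    let ?I = "{(r,a),(r,b)}"
    have ind: "indep_vars (\<lambda>_. borel) (\<lambda>k x. x k) ?I"
      by (rule indep_vars_subset[OF indep_coords]) (use ka kb in auto)
    have int: "\<And>k. k \<in> ?I \<Longrightarrow> integrable ?M (\<lambda>x. x k)" using mom1 ka kb by auto
    have "(\<integral>w. (\<Prod>k\<in>?I. w k) \<partial>?M) = (\<Prod>k\<in>?I. \<integral>w. w k \<partial>?M)"
      by (rule indep_vars_lebesgue_integral) (use ind int in auto)
    moreover have "integrable ?M (\<lambda>w. (\<Prod>k\<in>?I. w k))"
      by (rule indep_vars_integrable) (use ind int in auto)
    ultimately show ?thesis using False mom1(2)[OF ka] by simp
  qed
  have e: "(\<lambda>w. Bm w r a * cnj (Bm w r b)) = (\<lambda>w. complex_of_real (1 + w (r,a) * w (r,b)) + \<i> * complex_of_real (w (r,a) - w (r,b)))"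
    by (simp add: Bm_prod_expand)
  have i1: "integrable ?M (\<lambda>w. 1 + w (r,a) * w (r,b))" using iprod by simp
  have i2: "integrable ?M (\<lambda>w. w (r,a) - w (r,b))" using mom1(1)[OF ka] mom1(1)[OF kb] by simp
  show "integrable ?M (\<lambda>w. Bm w r a * cnj (Bm w r b))"
    unfolding e by (rule Bochner_Integration.integrable_add[OF integrable_of_real[OF i1] integrable_mult_right[OF integrable_of_real[OF i2]]])
  have "integral\<^sup>L ?M (\<lambda>w. Bm w r a * cnj (Bm w r b))
      = complex_of_real (integral\<^sup>L ?M (\<lambda>w. 1 + w (r,a) * w (r,b))) + \<i> * complex_of_real (integral\<^sup>L ?M (\<lambda>w. w (r,a) - w (r,b)))"
    unfolding e by (subst Bochner_Integration.integral_add[OF integrable_of_real[OF i1] integrable_mult_right[OF integrable_of_real[OF i2]]]) (simp only: integral_mult_right_zero integral_complex_of_real)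
  also have "integral\<^sup>L ?M (\<lambda>w. 1 + w (r,a) * w (r,b)) = 1 + (if a = b then s2 else 0)"
    using iprod by (subst Bochner_Integration.integral_add) (auto simp: prob_space)
  also have "integral\<^sup>L ?M (\<lambda>w. w (r,a) - w (r,b)) = 0"
    using mom1[OF ka] mom1[OF kb] by (subst Bochner_Integration.integral_diff) auto
  finally show "integral\<^sup>L ?M (\<lambda>w. Bm w r a * cnj (Bm w r b)) = (if a = b then 1 + complex_of_real s2 else 1)"
    by simp
qed

end


context
  fixes s2 :: real assumes s2pos: "0 < s2"
begin

lemma E_Xrow:
  assumes V: "V \<subseteq> {0..<m}" and p: "p permutes V" and f: "f \<in> V \<rightarrow>\<^sub>E {0..<n}"
  shows "integrable (Phi_dist s2 m n) (Xrow V p f)"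
    and "integral\<^sup>L (Phi_dist s2 m n) (Xrow V p f)
           = (\<Prod>r\<in>V. if f r = f (Hilbert_Choice.inv p r) then 1 + complex_of_real s2 else 1)"
proof -
  let ?M = "Phi_dist s2 m n"
  let ?K = "{0..<m} \<times> {0..<n}"
  interpret prob_space ?M by (rule probM[OF s2pos])
  have finV: "finite V" using V finite_subset by blast
  have ipV: "\<And>r. r \<in> V \<Longrightarrow> Hilbert_Choice.inv p r \<in> V"
    using p by (simp add: permutes_in_image permutes_inv)
  have fr: "\<And>r. r \<in> V \<Longrightarrow> f r < n" using f by auto
  have fir: "\<And>r. r \<in> V \<Longrightarrow> f (Hilbert_Choice.inv p r) < n" using f ipV by auto
  have rm: "\<And>r. r \<in> V \<Longrightarrow> r < m" using V by auto
  have "integrable ?M (Xrow V p f) \<and> integral\<^sup>L ?M (Xrow V p f)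
           = (\<Prod>r\<in>V. if f r = f (Hilbert_Choice.inv p r) then 1 + complex_of_real s2 else 1)"
  proof (cases "V = {}")
    case True
    have e: "Xrow {} p f = (\<lambda>_. 1)" by (simp add: Xrow_def fun_eq_iff)
    show ?thesis using True by (simp add: e prob_space)
  next
    case False
    then obtain r0 where r0: "r0 \<in> V" by auto
    have "(r0, f r0) \<in> ?K" using rm[OF r0] fr[OF r0] by auto
    then have K: "?K \<noteq> {}" by blast
    define Row where "Row r = {r} \<times> {0..<n}" for r :: nat
    define Y where "Y r y = Bm y r (f r) * cnj (Bm y r (f (Hilbert_Choice.inv p r)))" for r and y :: "nat \<times> nat \<Rightarrow> real"
    have ind1: "indep_vars (\<lambda>r. PiM (Row r) (\<lambda>_. borel)) (\<lambda>r \<omega>. restrict (\<lambda>k. \<omega> k) (Row r)) V"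
      by (rule indep_vars_restrict[OF indep_coords[OF s2pos K]])
         (use rm in \<open>auto simp: Row_def disjoint_family_on_def\<close>)
    have Ym: "Y r \<in> borel_measurable (PiM (Row r) (\<lambda>_. borel))" if r: "r \<in> V" for r
    proof -
      have c1: "(\<lambda>y. y (r, f r)) \<in> borel_measurable (PiM (Row r) (\<lambda>_. borel :: real measure))"
        by (rule measurable_component_singleton) (use fr r in \<open>auto simp: Row_def\<close>)
      have c2: "(\<lambda>y. y (r, f (Hilbert_Choice.inv p r))) \<in> borel_measurable (PiM (Row r) (\<lambda>_. borel :: real measure))"
        by (rule measurable_component_singleton) (use fir r in \<open>auto simp: Row_def\<close>)
      show ?thesis unfolding Y_def Bm_def complex_cnj_add complex_cnj_mult complex_cnj_i complex_cnj_complex_of_real complex_cnj_one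
        using c1 c2 by measurable
    qed
    have ind: "indep_vars (\<lambda>_. borel) (\<lambda>r \<omega>. Y r (restrict (\<lambda>k. \<omega> k) (Row r))) V"
      by (rule indep_vars_compose2[OF ind1 Ym])
    have YR: "\<And>r. r \<in> V \<Longrightarrow> (\<lambda>\<omega>. Y r (restrict (\<lambda>k. \<omega> k) (Row r))) = (\<lambda>w. Bm w r (f r) * cnj (Bm w r (f (Hilbert_Choice.inv p r))))"
      using fr fir by (auto simp: Y_def Bm_def Row_def fun_eq_iff)
    have intY: "\<And>r. r \<in> V \<Longrightarrow> integrable ?M (\<lambda>\<omega>. Y r (restrict (\<lambda>k. \<omega> k) (Row r)))"
      using YR row_factor(1)[OF s2pos rm fr fir] by simp
    have X: "Xrow V p f = (\<lambda>\<omega>. \<Prod>r\<in>V. Y r (restrict (\<lambda>k. \<omega> k) (Row r)))"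
      unfolding Xrow_def using YR by (auto simp: fun_eq_iff intro!: prod.cong dest: fun_cong)
    show ?thesis
    proof
      show "integrable ?M (Xrow V p f)" unfolding X
        by (rule indep_vars_integrable[OF finV ind intY])
      have "integral\<^sup>L ?M (Xrow V p f) = (\<Prod>r\<in>V. integral\<^sup>L ?M (\<lambda>\<omega>. Y r (restrict (\<lambda>k. \<omega> k) (Row r))))"
        unfolding X by (rule indep_vars_lebesgue_integral[OF finV ind intY])
      also have "\<dots> = (\<Prod>r\<in>V. if f r = f (Hilbert_Choice.inv p r) then 1 + complex_of_real s2 else 1)"
        by (rule prod.cong[OF refl]) (simp add: YR row_factor(2)[OF s2pos rm fr fir])
      finally show "integral\<^sup>L ?M (Xrow V p f) = (\<Prod>r\<in>V. if f r = f (Hilbert_Choice.inv p r) then 1 + complex_of_real s2 else 1)" .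
    qed
  qed
  then show "integrable ?M (Xrow V p f)"
    and "integral\<^sup>L ?M (Xrow V p f) = (\<Prod>r\<in>V. if f r = f (Hilbert_Choice.inv p r) then 1 + complex_of_real s2 else 1)"
    by auto
qed

end


lemma perm_sum_inv:
  fixes G :: "(nat \<Rightarrow> nat) \<Rightarrow> complex"
  assumes V: "finite V"
  shows "(\<Sum>p | p permutes V. of_int (sign p) * G (Hilbert_Choice.inv p)) = (\<Sum>p | p permutes V. of_int (sign p) * G p)"
proof -
  have "(\<Sum>p | p permutes V. of_int (sign p) * G (Hilbert_Choice.inv p))
      = (\<Sum>p | p permutes V. (\<lambda>q. of_int (sign q) * G q) (Hilbert_Choice.inv p))"
    by (intro sum.cong refl) (auto simp: sign_inverse permutes_imp_permutation[OF V])
  also have "\<dots> = (\<Sum>p | p permutes V. of_int (sign p) * G p)"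
    by (rule sum_permutations_inverse[symmetric])
  finally show ?thesis .
qed

context
  fixes s2 :: real assumes s2pos: "0 < s2"
begin

definition Dk :: "nat \<Rightarrow> complex" where
  "Dk k = complex_of_real s2 ^ k + of_nat k * complex_of_real s2 ^ (k - 1)"

lemma E_det:
  fixes c :: real
  assumes g: "\<forall>i<m. cmod (g i) = 1" and h: "\<forall>j<n. cmod (h j) = 1"
  shows "integrable (Phi_dist s2 m n) (\<lambda>Phi. det (1\<^sub>m m + complex_of_real c \<cdot>\<^sub>m (Hhat m n g h Phi * herm (Hhat m n g h Phi))))"
    and "integral\<^sup>L (Phi_dist s2 m n) (\<lambda>Phi. det (1\<^sub>m m + complex_of_real c \<cdot>\<^sub>m (Hhat m n g h Phi * herm (Hhat m n g h Phi))))
       = (\<Sum>k=0..m. of_nat (m choose k) * (complex_of_real c ^ k * (of_nat (\<Prod>i = 0..<k. n - i) * Dk k)))"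
proof -
  let ?M = "Phi_dist s2 m n"
  let ?U = "{0..<m}"
  have eq: "(\<lambda>Phi. det (1\<^sub>m m + complex_of_real c \<cdot>\<^sub>m (Hhat m n g h Phi * herm (Hhat m n g h Phi))))
    = (\<lambda>Phi. \<Sum>V\<in>Pow ?U. \<Sum>p | p permutes V. of_int (sign p) *
         (complex_of_real c ^ card V * (\<Sum>f\<in>V \<rightarrow>\<^sub>E {0..<n}. Xrow V p f Phi)))"
    by (rule ext, rule det_expand[OF g h])
  have pV: "\<And>V p. V \<in> Pow ?U \<Longrightarrow> p \<in> {p. p permutes V} \<Longrightarrow> V \<subseteq> ?U \<and> p permutes V" by auto
  show "integrable ?M (\<lambda>Phi. det (1\<^sub>m m + complex_of_real c \<cdot>\<^sub>m (Hhat m n g h Phi * herm (Hhat m n g h Phi))))"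
    unfolding eq
    by (intro Bochner_Integration.integrable_sum integrable_mult_right E_Xrow(1)[OF s2pos])
       (auto dest: pV)
  have "integral\<^sup>L ?M (\<lambda>Phi. det (1\<^sub>m m + complex_of_real c \<cdot>\<^sub>m (Hhat m n g h Phi * herm (Hhat m n g h Phi))))
     = (\<Sum>V\<in>Pow ?U. \<Sum>p | p permutes V. of_int (sign p) *
         (complex_of_real c ^ card V * (\<Sum>f\<in>V \<rightarrow>\<^sub>E {0..<n}. integral\<^sup>L ?M (Xrow V p f))))"
    unfolding eq
    apply (subst Bochner_Integration.integral_sum)
     apply (intro Bochner_Integration.integrable_sum integrable_mult_right E_Xrow(1)[OF s2pos]; auto dest: pV)
    apply (intro sum.cong refl)
    apply (subst Bochner_Integration.integral_sum)
     apply (intro Bochner_Integration.integrable_sum integrable_mult_right E_Xrow(1)[OF s2pos]; auto dest: pV)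
    apply (intro sum.cong refl)
    apply (subst integral_mult_right_zero)
    apply (subst integral_mult_right_zero)
    apply (subst Bochner_Integration.integral_sum)
     apply (intro E_Xrow(1)[OF s2pos]; auto dest: pV)
    apply simp
    done
  also have "\<dots> = (\<Sum>V\<in>Pow ?U. complex_of_real c ^ card V * (of_nat (\<Prod>i = 0..<card V. n - i) * Dk (card V)))"
  proof (rule sum.cong[OF refl])
    fix V assume "V \<in> Pow ?U"
    then have VU: "V \<subseteq> ?U" and finV: "finite V" using finite_subset by auto
    have "(\<Sum>p | p permutes V. of_int (sign p) *
         (complex_of_real c ^ card V * (\<Sum>f\<in>V \<rightarrow>\<^sub>E {0..<n}. integral\<^sup>L ?M (Xrow V p f))))
       = (\<Sum>p | p permutes V. of_int (sign p) *
         (complex_of_real c ^ card V * (\<Sum>f\<in>V \<rightarrow>\<^sub>E {0..<n}. (\<Prod>r\<in>V. if f r = f (Hilbert_Choice.inv p r) then 1 + complex_of_real s2 else 1))))"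
      by (intro sum.cong refl arg_cong2[where f="(*)"] E_Xrow(2)[OF s2pos VU]) auto
    also have "\<dots> = complex_of_real c ^ card V * (\<Sum>f\<in>V \<rightarrow>\<^sub>E {0..<n}. \<Sum>p | p permutes V. of_int (sign p) *
          (\<Prod>r\<in>V. if f r = f (Hilbert_Choice.inv p r) then 1 + complex_of_real s2 else 1))"
      by (simp add: sum_distrib_left sum_distrib_right ac_simps sum.swap[of _ "{p. p permutes V}"])
    also have "\<dots> = complex_of_real c ^ card V * (\<Sum>f\<in>V \<rightarrow>\<^sub>E {0..<n}. if inj_on f V then Dk (card V) else 0)"
    proof (intro arg_cong2[where f="(*)"] refl sum.cong)
      fix f
      show "(\<Sum>p | p permutes V. of_int (sign p) *
          (\<Prod>r\<in>V. if f r = f (Hilbert_Choice.inv p r) then 1 + complex_of_real s2 else 1)) = (if inj_on f V then Dk (card V) else 0)"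
        using perm_sum_inv[OF finV, of "\<lambda>q. \<Prod>r\<in>V. if f r = f (q r) then 1 + complex_of_real s2 else 1"]
              perm_sum_f[OF finV, of f "complex_of_real s2"]
        by (simp add: Dk_def)
    qed
    also have "\<dots> = complex_of_real c ^ card V * (of_nat (\<Prod>i = 0..<card V. n - i) * Dk (card V))"
      by (simp add: sum_inj_count[OF finV])
    finally show "(\<Sum>p | p permutes V. of_int (sign p) *
         (complex_of_real c ^ card V * (\<Sum>f\<in>V \<rightarrow>\<^sub>E {0..<n}. integral\<^sup>L ?M (Xrow V p f))))
       = complex_of_real c ^ card V * (of_nat (\<Prod>i = 0..<card V. n - i) * Dk (card V))" .
  qed
  also have "\<dots> = (\<Sum>k=0..m. of_nat (m choose k) * (complex_of_real c ^ k * (of_nat (\<Prod>i = 0..<k. n - i) * Dk k)))"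
    using sum_Pow_card[of ?U "\<lambda>k. complex_of_real c ^ k * (of_nat (\<Prod>i = 0..<k. n - i) * Dk k)"] by simp
  finally show "integral\<^sup>L ?M (\<lambda>Phi. det (1\<^sub>m m + complex_of_real c \<cdot>\<^sub>m (Hhat m n g h Phi * herm (Hhat m n g h Phi))))
       = (\<Sum>k=0..m. of_nat (m choose k) * (complex_of_real c ^ k * (of_nat (\<Prod>i = 0..<k. n - i) * Dk k)))" .
qed

end


lemma P_entry_gen:
  assumes A: "A \<in> carrier_mat m n" and "i < m" "j < m"
  shows "(1\<^sub>m m + complex_of_real c \<cdot>\<^sub>m (A * herm A)) $$ (i,j)
     = (if i = j then 1 else 0) + complex_of_real c * (\<Sum>l = 0..<n. A $$ (i,l) * cnj (A $$ (j,l)))"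
  using assms by (auto simp: herm_def scalar_prod_def intro!: sum.cong)

lemma quad_alg:
  fixes v :: "nat \<Rightarrow> complex" and a :: "nat \<Rightarrow> nat \<Rightarrow> complex" and z :: complex
  shows "(\<Sum>i = 0..<m. cnj (v i) * (\<Sum>j = 0..<m. ((if i = j then 1 else 0) + z * (\<Sum>l = 0..<n. a i l * cnj (a j l))) * v j))
    = (\<Sum>i = 0..<m. cnj (v i) * v i)
      + z * (\<Sum>l = 0..<n. cnj (\<Sum>j = 0..<m. cnj (a j l) * v j) * (\<Sum>j = 0..<m. cnj (a j l) * v j))"
proof -
  let ?F = "\<lambda>i j l. z * (cnj (v i) * a i l * cnj (a j l) * v j)"
  have "(\<Sum>i = 0..<m. cnj (v i) * (\<Sum>j = 0..<m. ((if i = j then 1 else 0) + z * (\<Sum>l = 0..<n. a i l * cnj (a j l))) * v j))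
     = (\<Sum>i = 0..<m. cnj (v i) * v i + (\<Sum>j = 0..<m. \<Sum>l = 0..<n. ?F i j l))"
  proof (rule sum.cong[OF refl])
    fix i assume i: "i \<in> {0..<m}"
    have "(\<Sum>j = 0..<m. ((if i = j then 1 else 0) + z * (\<Sum>l = 0..<n. a i l * cnj (a j l))) * v j)
       = (\<Sum>j = 0..<m. (if i = j then 1 else 0) * v j) + (\<Sum>j = 0..<m. z * (\<Sum>l = 0..<n. a i l * cnj (a j l)) * v j)"
      by (simp only: distrib_right sum.distrib)
    also have "(\<Sum>j = 0..<m. (if i = j then 1 else 0) * v j) = (\<Sum>j = 0..<m. (if i = j then v j else 0))"
      by (rule sum.cong) auto
    also have "\<dots> = v i" using i by simp
    finally show "cnj (v i) * (\<Sum>j = 0..<m. ((if i = j then 1 else 0) + z * (\<Sum>l = 0..<n. a i l * cnj (a j l))) * v j)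
       = cnj (v i) * v i + (\<Sum>j = 0..<m. \<Sum>l = 0..<n. ?F i j l)"
      by (simp add: distrib_left sum_distrib_left sum_distrib_right mult.assoc mult.left_commute)
  qed
  also have "\<dots> = (\<Sum>i = 0..<m. cnj (v i) * v i) + (\<Sum>i = 0..<m. \<Sum>j = 0..<m. \<Sum>l = 0..<n. ?F i j l)"
    by (rule sum.distrib)
  also have "(\<Sum>i = 0..<m. \<Sum>j = 0..<m. \<Sum>l = 0..<n. ?F i j l) = (\<Sum>i = 0..<m. \<Sum>l = 0..<n. \<Sum>j = 0..<m. ?F i j l)"
    by (rule sum.cong[OF refl], rule sum.swap)
  also have "\<dots> = (\<Sum>l = 0..<n. \<Sum>i = 0..<m. \<Sum>j = 0..<m. ?F i j l)"
    by (rule sum.swap)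
  also have "\<dots> = z * (\<Sum>l = 0..<n. \<Sum>i = 0..<m. \<Sum>j = 0..<m. (a i l * cnj (v i)) * (cnj (a j l) * v j))"
    unfolding sum_distrib_left by (intro sum.cong refl) (simp add: mult_ac)
  also have "(\<Sum>l = 0..<n. \<Sum>i = 0..<m. \<Sum>j = 0..<m. (a i l * cnj (v i)) * (cnj (a j l) * v j))
     = (\<Sum>l = 0..<n. cnj (\<Sum>j = 0..<m. cnj (a j l) * v j) * (\<Sum>j = 0..<m. cnj (a j l) * v j))"
    by (intro sum.cong refl) (simp add: cnj_sum sum_product)
  finally show ?thesis .
qed

lemma quad_form:
  fixes v :: "nat \<Rightarrow> complex"
  assumes A: "A \<in> carrier_mat m n"
  shows "(\<Sum>i = 0..<m. cnj (v i) * (\<Sum>j = 0..<m. (1\<^sub>m m + complex_of_real c \<cdot>\<^sub>m (A * herm A)) $$ (i,j) * v j))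
    = (\<Sum>i = 0..<m. cnj (v i) * v i)
      + complex_of_real c * (\<Sum>l = 0..<n. cnj (\<Sum>j = 0..<m. cnj (A $$ (j,l)) * v j) * (\<Sum>j = 0..<m. cnj (A $$ (j,l)) * v j))"
proof -
  have "(\<Sum>i = 0..<m. cnj (v i) * (\<Sum>j = 0..<m. (1\<^sub>m m + complex_of_real c \<cdot>\<^sub>m (A * herm A)) $$ (i,j) * v j))
    = (\<Sum>i = 0..<m. cnj (v i) * (\<Sum>j = 0..<m. ((if i = j then 1 else 0) + complex_of_real c * (\<Sum>l = 0..<n. A $$ (i,l) * cnj (A $$ (j,l)))) * v j))"
    by (intro sum.cong refl arg_cong2[where f="(*)"]) (auto simp: P_entry_gen[OF A])
  also have "\<dots> = (\<Sum>i = 0..<m. cnj (v i) * v i)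
      + complex_of_real c * (\<Sum>l = 0..<n. cnj (\<Sum>j = 0..<m. cnj (A $$ (j,l)) * v j) * (\<Sum>j = 0..<m. cnj (A $$ (j,l)) * v j))"
    by (rule quad_alg)
  finally show ?thesis .
qed

lemma mulvec_entry: "B \<in> carrier_mat k k \<Longrightarrow> v \<in> carrier_vec k \<Longrightarrow> i < k \<Longrightarrow>
  (B *\<^sub>v v) $ i = (\<Sum>j = 0..<k. B $$ (i,j) * v $ j)"
  by (auto simp: scalar_prod_def)

lemma det_neg: "(B :: complex mat) \<in> carrier_mat k k \<Longrightarrow> det (- B) = (-1) ^ k * det B"
proof -
  assume B: "B \<in> carrier_mat k k"
  have "- B = (-1) \<cdot>\<^sub>m B" using B by (intro eq_matI) auto
  then show ?thesis using B by simp
qed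

lemma eigen_real_ge1:
  assumes A: "A \<in> carrier_mat m n" and c: "0 \<le> c"
    and ev: "eigenvalue (1\<^sub>m m + complex_of_real c \<cdot>\<^sub>m (A * herm A)) a"
  shows "\<exists>r\<ge>1. a = complex_of_real r"
proof -
  let ?P = "1\<^sub>m m + complex_of_real c \<cdot>\<^sub>m (A * herm A)"
  have Pc: "?P \<in> carrier_mat m m" using A unfolding carrier_mat_def by (simp add: herm_def)
  from ev obtain v where v: "v \<in> carrier_vec m" "v \<noteq> 0\<^sub>v m" "?P *\<^sub>v v = a \<cdot>\<^sub>v v"
    unfolding eigenvalue_def eigenvector_def using Pc by auto
  define Nr where "Nr = (\<Sum>i = 0..<m. (cmod (v $ i))^2)"
  define Sr where "Sr = (\<Sum>l = 0..<n. (cmod (\<Sum>j = 0..<m. cnj (A $$ (j,l)) * v $ j))^2)"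
  have Npos: "Nr > 0"
  proof -
    from v(1,2) obtain i where i: "i < m" "v $ i \<noteq> 0" by (auto simp: vec_eq_iff)
    have "(cmod (v $ i))^2 \<le> Nr" unfolding Nr_def
      by (rule member_le_sum) (use i in auto)
    moreover have "(cmod (v $ i))^2 > 0" using i by simp
    ultimately show ?thesis by linarith
  qed
  have Snn: "Sr \<ge> 0" unfolding Sr_def by (intro sum_nonneg) auto
  have "(\<Sum>i = 0..<m. cnj (v $ i) * (?P *\<^sub>v v) $ i) = a * (\<Sum>i = 0..<m. cnj (v $ i) * v $ i)"
    using v(1,3) by (simp add: sum_distrib_left ac_simps)
  moreover have "(\<Sum>i = 0..<m. cnj (v $ i) * (?P *\<^sub>v v) $ i)
     = (\<Sum>i = 0..<m. cnj (v $ i) * (\<Sum>j = 0..<m. ?P $$ (i,j) * v $ j))"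
    by (intro sum.cong refl arg_cong2[where f="(*)"]) (use mulvec_entry[OF Pc v(1)] in auto)
  moreover note quad_form[OF A, of "\<lambda>i. v $ i" c]
  moreover have "(\<Sum>i = 0..<m. cnj (v $ i) * v $ i) = complex_of_real Nr"
    unfolding Nr_def of_real_sum complex_norm_square by (simp add: mult.commute)
  moreover have "(\<Sum>l = 0..<n. cnj (\<Sum>j = 0..<m. cnj (A $$ (j,l)) * v $ j) * (\<Sum>j = 0..<m. cnj (A $$ (j,l)) * v $ j)) = complex_of_real Sr"
    unfolding Sr_def of_real_sum complex_norm_square by (simp add: mult.commute)
  ultimately have "a * complex_of_real Nr = complex_of_real (Nr + c * Sr)" by simp
  then have "a = complex_of_real ((Nr + c * Sr) / Nr)" using Npos
    by (simp add: field_simps)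
  moreover have "(Nr + c * Sr) / Nr \<ge> 1" using Npos Snn c by (simp add: field_simps)
  ultimately show ?thesis by blast
qed

lemma prod_list_real_ge1:
  assumes "\<forall>a\<in>set as. \<exists>r\<ge>1. a = complex_of_real r"
  shows "\<exists>r\<ge>1. prod_list as = complex_of_real r"
  using assms
proof (induction as)
  case Nil then show ?case by (intro exI[of _ 1]) simp
next
  case (Cons a as)
  then obtain r where r: "r \<ge> 1" "prod_list as = complex_of_real r" by auto
  from Cons.prems obtain q where q: "q \<ge> 1" "a = complex_of_real q" by auto
  have "1 * 1 \<le> q * r" by (rule mult_mono) (use r q in auto)
  then show ?case using r q by (intro exI[of _ "q * r"]) auto
qed

lemma char_matrix0: "B \<in> carrier_mat k k \<Longrightarrow> char_matrix B 0 = B"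
  unfolding char_matrix_def by (intro eq_matI) auto

lemma det_real_ge1:
  assumes A: "A \<in> carrier_mat m n" and c: "0 \<le> c"
  shows "\<exists>r\<ge>1. det (1\<^sub>m m + complex_of_real c \<cdot>\<^sub>m (A * herm A)) = complex_of_real r"
proof -
  let ?P = "1\<^sub>m m + complex_of_real c \<cdot>\<^sub>m (A * herm A)"
  have Pc: "?P \<in> carrier_mat m m" using A unfolding carrier_mat_def by (simp add: herm_def)
  obtain as where as: "char_poly ?P = (\<Prod>a\<leftarrow>as. [:- a, 1:])" "length as = m"
    using char_poly_factorized[OF Pc] by blast
  have "poly (char_poly ?P) 0 = det (- (char_matrix ?P 0))" by (rule char_poly_matrix[OF Pc])
  also have "char_matrix ?P 0 = ?P" by (rule char_matrix0[OF Pc])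
  also have "det (- ?P) = (-1) ^ m * det ?P" by (rule det_neg[OF Pc])
  finally have d1: "poly (char_poly ?P) 0 = (-1) ^ m * det ?P" .
  have "poly (char_poly ?P) 0 = (\<Prod>a\<leftarrow>as. - a)" unfolding as(1)
    by (induction as) auto
  also have "\<dots> = (-1) ^ length as * prod_list as"
    by (induction as) auto
  finally have "(-1) ^ m * det ?P = (-1) ^ m * prod_list as" using d1 as(2) by simp
  moreover have "(-1::complex) ^ m \<noteq> 0" by simp
  ultimately have detP: "det ?P = prod_list as" by (metis mult_left_cancel)
  have "\<forall>a\<in>set as. \<exists>r\<ge>1. a = complex_of_real r"
  proof
    fix a assume a: "a \<in> set as"
    have "poly (char_poly ?P) a = 0" unfolding as(1) using a
      by (induction as) auto
    then have "eigenvalue ?P a" using eigenvalue_root_char_poly[OF Pc] by simp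
    then show "\<exists>r\<ge>1. a = complex_of_real r" by (rule eigen_real_ge1[OF A c])
  qed
  then show ?thesis unfolding detP by (rule prod_list_real_ge1)
qed


lemma prod_choose_real:
  assumes "k \<le> n"
  shows "real (\<Prod>i = 0..<k. n - i) = real (n choose k) * fact k"
proof -
  have "real (n choose k) * fact k = (real n gchoose k) * fact k" by (simp add: binomial_gbinomial)
  also have "\<dots> = (\<Prod>i = 0..<k. real n - of_nat i)" by (rule gbinomial_mult_fact')
  also have "\<dots> = real (\<Prod>i = 0..<k. n - i)"
    unfolding of_nat_prod using assms by (intro prod.cong refl) (simp add: of_nat_diff)
  finally show ?thesis by simp
qed

lemma log_tangent:
  assumes x: "0 < x" and a: "0 < a"
  shows "log 2 x \<le> log 2 a + (x / a - 1) / ln 2"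
proof -
  have "ln (x / a) \<le> x / a - 1" by (rule ln_le_minus_one) (use x a in simp)
  then have "ln x \<le> ln a + (x / a - 1)" using x a by (simp add: ln_div)
  then have "ln x / ln 2 \<le> (ln a + (x / a - 1)) / ln 2" by (simp add: divide_right_mono)
  then show ?thesis by (simp add: log_def add_divide_distrib)
qed

theorem theorem9:
  fixes rho s2 :: real and MR MT :: nat and g h :: "nat \<Rightarrow> complex"
  assumes "rho > 0" and "s2 > 0" and "MR \<le> MT"
    and "\<forall>i<MR. cmod (g i) = 1" and "\<forall>j<MT. cmod (h j) = 1"
  shows "(\<integral>Phi. cap_integrand rho MR MT g h Phi \<partial>Phi_dist s2 MR MT)
     \<le> log 2 (1 + (\<Sum>n=1..MR. (rho / real MT) ^ n * s2 ^ n * real (MR choose n)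
                  * real (MT choose n) * fact n * (1 + real n / s2)))"
proof -
  note rho = assms(1) and s2 = assms(2) and mn = assms(3) and g = assms(4) and h = assms(5)
  define c where "c = rho / real MT"
  have c0: "0 \<le> c" unfolding c_def using rho by simp
  let ?M = "Phi_dist s2 MR MT"
  interpret prob_space ?M by (rule probM[OF s2])
  define det_fun where "det_fun Phi = det (1\<^sub>m MR + complex_of_real c \<cdot>\<^sub>m (Hhat MR MT g h Phi * herm (Hhat MR MT g h Phi)))" for Phi
  define D where "D Phi = Re (det_fun Phi)" for Phi
  define a where "a = 1 + (\<Sum>n=1..MR. (rho / real MT) ^ n * s2 ^ n * real (MR choose n)
                  * real (MT choose n) * fact n * (1 + real n / s2))"
  have capD: "cap_integrand rho MR MT g h Phi = log 2 (D Phi)" for Phi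
    unfolding cap_integrand_def D_def det_fun_def c_def ..
  have D1: "D Phi \<ge> 1" for Phi
  proof -
    have "Hhat MR MT g h Phi \<in> carrier_mat MR MT" by (simp add: Hhat_def)
    from det_real_ge1[OF this c0] obtain r where "r \<ge> 1" "det_fun Phi = complex_of_real r"
      unfolding det_fun_def by blast
    then show ?thesis unfolding D_def by simp
  qed
  have int_det: "integrable ?M det_fun" unfolding det_fun_def by (rule E_det(1)[OF s2 g h])
  have intD: "integrable ?M D" unfolding D_def using int_det by simp
  have "integral\<^sup>L ?M D = Re (integral\<^sup>L ?M det_fun)" unfolding D_def using int_det by simp
  also have "integral\<^sup>L ?M det_fun = (\<Sum>k=0..MR. of_nat (MR choose k) * (complex_of_real c ^ k * (of_nat (\<Prod>i = 0..<k. MT - i) * Dk s2 k)))"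
    unfolding det_fun_def by (rule E_det(2)[OF s2 g h])
  also have "\<dots> = complex_of_real (\<Sum>k=0..MR. real (MR choose k) * (c ^ k * (real (\<Prod>i = 0..<k. MT - i) * (s2 ^ k + real k * s2 ^ (k - 1)))))"
    by (simp add: Dk_def[OF s2] of_real_sum of_real_mult of_real_power of_real_add)
  also have "Re \<dots> = (\<Sum>k=0..MR. real (MR choose k) * (c ^ k * (real (\<Prod>i = 0..<k. MT - i) * (s2 ^ k + real k * s2 ^ (k - 1)))))"
    by (rule Re_complex_of_real)
  also have "\<dots> = 1 + (\<Sum>k=1..MR. real (MR choose k) * (c ^ k * (real (\<Prod>i = 0..<k. MT - i) * (s2 ^ k + real k * s2 ^ (k - 1)))))"
    by (subst sum.atLeast_Suc_atMost) auto
  also have "(\<Sum>k=1..MR. real (MR choose k) * (c ^ k * (real (\<Prod>i = 0..<k. MT - i) * (s2 ^ k + real k * s2 ^ (k - 1)))))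
     = (\<Sum>n=1..MR. (rho / real MT) ^ n * s2 ^ n * real (MR choose n) * real (MT choose n) * fact n * (1 + real n / s2))"
  proof (rule sum.cong[OF refl])
    fix k assume k: "k \<in> {1..MR}"
    then have kn: "k \<le> MT" using mn by simp
    obtain j where j: "k = Suc j" using k by (cases k) auto
    have "s2 ^ k + real k * s2 ^ (k - 1) = s2 ^ k * (1 + real k / s2)"
      using s2 unfolding j by (simp add: field_simps)
    then show "real (MR choose k) * (c ^ k * (real (\<Prod>i = 0..<k. MT - i) * (s2 ^ k + real k * s2 ^ (k - 1))))
      = (rho / real MT) ^ k * s2 ^ k * real (MR choose k) * real (MT choose k) * fact k * (1 + real k / s2)"
      unfolding prod_choose_real[OF kn] c_def by (simp add: mult_ac)
  qed
  finally have ED: "integral\<^sup>L ?M D = a" unfolding a_def .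
  have a1: "a \<ge> 1"
  proof -
    have "integral\<^sup>L ?M D \<ge> integral\<^sup>L ?M (\<lambda>_. 1)"
      by (rule integral_mono[OF _ intD]) (use D1 in auto)
    then show ?thesis using ED by (simp add: prob_space)
  qed
  have "(\<integral>Phi. cap_integrand rho MR MT g h Phi \<partial>?M) \<le> log 2 a"
  proof (cases "integrable ?M (\<lambda>Phi. cap_integrand rho MR MT g h Phi)")
    case False
    then have "(\<integral>Phi. cap_integrand rho MR MT g h Phi \<partial>?M) = 0" by (rule not_integrable_integral_eq)
    moreover have "log 2 a \<ge> 0" using a1 by simp
    ultimately show ?thesis by simp
  next
    case True
    define G where "G Phi = (log 2 a - 1 / ln 2) + D Phi * (1 / (a * ln 2))" for Phi
    have intG: "integrable ?M G" unfolding G_def using intD by simp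
    have "(\<integral>Phi. cap_integrand rho MR MT g h Phi \<partial>?M) \<le> integral\<^sup>L ?M G"
    proof (rule integral_mono[OF True intG])
      fix Phi
      have "log 2 (D Phi) \<le> log 2 a + (D Phi / a - 1) / ln 2"
        by (rule log_tangent) (use D1[of Phi] a1 in auto)
      also have "\<dots> = G Phi" unfolding G_def by (simp add: field_simps)
      finally show "cap_integrand rho MR MT g h Phi \<le> G Phi" unfolding capD .
    qed
    also have "integral\<^sup>L ?M G = (log 2 a - 1 / ln 2) + a * (1 / (a * ln 2))"
      unfolding G_def using intD ED by (simp add: prob_space)
    also have "\<dots> = log 2 a" using a1 by simp
    finally show ?thesis .
  qed
  then show ?thesis unfolding a_def .
qed


end
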